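(* Let $\mathfrak g$ be of type $A_n$ and $\lambda=\sum_{i=1}^n r_i\omega_i\in P^+$. Define $\lambda^1,\lambda^2$ as follows: if all $r_i$ are even, $\lambda^1=\lambda^2=\lambda/2$... more precisely $\lambda^1=\lambda^2=\sum_i (r_i/2)\omega_i$; otherwise let $i_0<i_1<\dots<i_p$ be the indices $i$ with $r_i$ odd, $I_+=I\setminus\{i_0,\dots,i_p\}$, and set $$\lambda^1=\sum_{s=0}^p\frac{r_{i_s}+(-1)^s}{2}\,\omega_{i_s}+\sum_{i\in I_+}\frac{r_i}{2}\,\omega_i,\qquad\lambda^2=\lambda-\lambda^1.$$ Let $\boldsymbol\lambda_{\max}=(\lambda^1,\lambda^2)\in P^+(\lambda,2)$. Then either $\lambda^1=\lambda^2$ or $\lambda^2=\lambda^1-w^{-1}\omega_i$ for some $w\in W$ and $i\in I$. In either case $\boldsymbol\lambda_{\max}$ is the unique maximal element of $P^+(\lambda,2)/\!\sim$: every $\boldsymbol\mu\in P^+(\lambda,2)$ satisfies $\boldsymbol\mu\preceq\boldsymbol\lambda_{\max}$.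
   Context: $\mathfrak g=\mathfrak{sl}_{n+1}$ with simple roots indexed by $I=\{1,\dots,n\}$, fundamental weights $\omega_i$, positive roots $R^+$, coroots $h_\alpha$, Weyl group $W$, dominant integral weights $P^+$. $P^+(\lambda,2)=\{(\lambda_1,\lambda_2)\in(P^+)^2:\lambda_1+\lambda_2=\lambda\}$; $(\lambda_1,\lambda_2)\preceq(\mu_1,\mu_2)$ means $\min\{\lambda_1(h_\alpha),\lambda_2(h_\alpha)\}\le\min\{\mu_1(h_\alpha),\mu_2(h_\alpha)\}$ for all $\alpha\in R^+$; $\sim$ means equality of these minima for all $\alpha$. *)

theory Defs
  imports Main "HOL-Library.Function_Algebras"
begin

text \<open>Weights of sl_(n+1) are encoded by their coordinates in the basis of
fundamental weights: a weight mu is a function nat => int, mu i being the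
coefficient of omega_i (i in I = {1..n}); coordinates outside I are 0.\<close>

type_synonym weight = "nat \<Rightarrow> int"

definition is_weight :: "nat \<Rightarrow> weight \<Rightarrow> bool" where
  "is_weight n mu \<longleftrightarrow> (\<forall>i. i \<notin> {1..n} \<longrightarrow> mu i = 0)"

definition dominant :: "nat \<Rightarrow> weight \<Rightarrow> bool" where
  "dominant n mu \<longleftrightarrow> is_weight n mu \<and> (\<forall>i\<in>{1..n}. 0 \<le> mu i)"

definition omega :: "nat \<Rightarrow> weight" where
  "omega i = (\<lambda>k. if k = i then 1 else 0)"

text \<open>Simple root alpha_i in fundamental-weight coordinates (columns of the
Cartan matrix of type A_n).\<close>
definition simple_root :: "nat \<Rightarrow> nat \<Rightarrow> weight" where
  "simple_root n i = (\<lambda>k. if k \<in> {1..n} then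
      (if k = i then 2 else if k + 1 = i \<or> k = i + 1 then -1 else 0) else 0)"

definition simple_refl :: "nat \<Rightarrow> nat \<Rightarrow> weight \<Rightarrow> weight" where
  "simple_refl n i mu = (\<lambda>k. mu k - mu i * simple_root n i k)"

inductive_set weyl :: "nat \<Rightarrow> (weight \<Rightarrow> weight) set" for n where
  weyl_id: "id \<in> weyl n"
| weyl_step: "w \<in> weyl n \<Longrightarrow> i \<in> {1..n} \<Longrightarrow> simple_refl n i \<circ> w \<in> weyl n"

text \<open>Positive roots of A_n: alpha_i + ... + alpha_j, 1 <= i <= j <= n,
encoded by the pair (i,j); mu(h_alpha) = mu_i + ... + mu_j.\<close>
definition pos_roots :: "nat \<Rightarrow> (nat \<times> nat) set" where
  "pos_roots n = {(i, j). 1 \<le> i \<and> i \<le> j \<and> j \<le> n}"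

definition eval_coroot :: "weight \<Rightarrow> nat \<times> nat \<Rightarrow> int" where
  "eval_coroot mu a = (\<Sum>k = fst a..snd a. mu k)"

definition P2 :: "nat \<Rightarrow> weight \<Rightarrow> (weight \<times> weight) set" where
  "P2 n lam = {(l1, l2). dominant n l1 \<and> dominant n l2 \<and> l1 + l2 = lam}"

definition preceq :: "nat \<Rightarrow> weight \<times> weight \<Rightarrow> weight \<times> weight \<Rightarrow> bool" where
  "preceq n l m \<longleftrightarrow> (\<forall>a\<in>pos_roots n.
      min (eval_coroot (fst l) a) (eval_coroot (snd l) a)
      \<le> min (eval_coroot (fst m) a) (eval_coroot (snd m) a))"

definition odd_rank :: "weight \<Rightarrow> nat \<Rightarrow> nat" where
  "odd_rank lam i = card {j. 1 \<le> j \<and> j < i \<and> odd (lam j)}"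

definition lam1 :: "nat \<Rightarrow> weight \<Rightarrow> weight" where
  "lam1 n lam = (\<lambda>i. if i \<in> {1..n} then
      (if odd (lam i) then (lam i + (-1) ^ odd_rank lam i) div 2 else lam i div 2)
      else 0)"

definition lam2 :: "nat \<Rightarrow> weight \<Rightarrow> weight" where
  "lam2 n lam = lam - lam1 n lam"

end

theory Submission
  imports Defs
begin

definition chi :: "nat \<Rightarrow> nat set \<Rightarrow> weight" where
  "chi n S = (\<lambda>j. if j \<in> {1..n} then (if j \<in> S then 1 else 0) - (if Suc j \<in> S then 1 else 0) else 0)"

lemma refl_invol: "i \<in> {1..n} \<Longrightarrow> simple_refl n i (simple_refl n i mu) = mu"
  by (rule ext) (simp add: simple_refl_def simple_root_def algebra_simps)

lemma weyl_inj: "w \<in> weyl n \<Longrightarrow> inj w"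
proof (induction rule: weyl.induct)
  case weyl_id then show ?case by simp
next
  case (weyl_step w i)
  have "inj (simple_refl n i)" by (metis injI refl_invol weyl_step.hyps(2))
  then show ?case using weyl_step inj_compose by blast
qed

lemma weyl_comp: "w1 \<in> weyl n \<Longrightarrow> w2 \<in> weyl n \<Longrightarrow> w1 \<circ> w2 \<in> weyl n"
proof (induction w1 rule: weyl.induct)
  case weyl_id then show ?case by simp
next
  case (weyl_step w i)
  then show ?case by (metis comp_assoc weyl.weyl_step)
qed

lemma refl_chi:
  assumes "k \<in> {1..n}" "k \<notin> S" "Suc k \<in> S"
  shows "simple_refl n k (chi n S) = chi n (insert k (S - {Suc k}))"
  using assms by (intro ext) (auto simp: simple_refl_def simple_root_def chi_def)

lemma down_closed:
  assumes "\<forall>k. 1 \<le> k \<longrightarrow> Suc k \<in> S \<longrightarrow> k \<in> S" "x \<in> S" "1 \<le> y" "y \<le> x"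
  shows "y \<in> S"
  using assms(2-4)
proof (induction x)
  case 0 then show ?case by simp
next
  case (Suc x)
  show ?case
  proof (cases "y = Suc x")
    case True then show ?thesis using Suc by simp
  next
    case False
    then have "y \<le> x" using Suc by simp
    then have "1 \<le> x" using Suc by simp
    then have "x \<in> S" using assms(1) Suc by blast
    then show ?thesis using Suc \<open>y \<le> x\<close> by blast
  qed
qed

lemma chi_interval: "m \<in> {1..n} \<Longrightarrow> chi n {1..m} = omega m"
  by (rule ext) (auto simp: chi_def omega_def)

lemma orbit:
  "S \<subseteq> {1..Suc n} \<Longrightarrow> card S = m \<Longrightarrow> 1 \<le> m \<Longrightarrow> m \<le> n \<Longrightarrow>
   \<exists>w\<in>weyl n. w (chi n S) = omega m"
proof (induction "\<Sum>S" arbitrary: S rule: less_induct)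
  case less
  have fin: "finite S" using less.prems(1) finite_subset by blast
  show ?case
  proof (cases "\<exists>k. 1 \<le> k \<and> k \<notin> S \<and> Suc k \<in> S")
    case False
    then have dc: "\<forall>k. 1 \<le> k \<longrightarrow> Suc k \<in> S \<longrightarrow> k \<in> S" by blast
    have ne: "S \<noteq> {}" using less.prems by auto
    define M where "M = Max S"
    have MS: "M \<in> S" using M_def fin ne by simp
    have "S = {1..M}"
    proof
      show "S \<subseteq> {1..M}" using less.prems(1) fin M_def by auto
      show "{1..M} \<subseteq> S" using down_closed[OF dc MS] by auto
    qed
    then have "m = M" using less.prems by simp
    then have "chi n S = omega m" using \<open>S = {1..M}\<close> chi_interval less.prems by simp
    then show ?thesis by (metis id_apply weyl.weyl_id)
  next
    case True
    then obtain k where k: "1 \<le> k" "k \<notin> S" "Suc k \<in> S" by blast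
    have kn: "k \<in> {1..n}" using k less.prems(1) by auto
    define S' where "S' = insert k (S - {Suc k})"
    have sub: "S' \<subseteq> {1..Suc n}" using S'_def kn less.prems(1) by auto
    have c: "card S' = m" using S'_def fin k less.prems
      by (simp add: card_Diff_singleton)
    have s1: "\<Sum>S = Suc k + \<Sum>(S - {Suc k})" using fin k by (simp add: sum.remove)
    have s2: "\<Sum>S' = k + \<Sum>(S - {Suc k})" using fin k S'_def by simp
    have "\<Sum>S' < \<Sum>S" using s1 s2 by simp
    then obtain w where w: "w \<in> weyl n" "w (chi n S') = omega m"
      using less.hyps sub c less.prems by blast
    have "(w \<circ> simple_refl n k) (chi n S) = omega m"
      using refl_chi[OF kn k(2,3)] w S'_def by simp
    moreover have "w \<circ> simple_refl n k \<in> weyl n"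
      using weyl_comp[OF w(1)] weyl.weyl_step[OF weyl.weyl_id kn] by simp
    ultimately show ?thesis by blast
  qed
qed

lemma odd_rank_Suc:
  "odd_rank lam (Suc j) = odd_rank lam j + (if 1 \<le> j \<and> odd (lam j) then 1 else 0)"
proof -
  have fin: "finite {x. 1 \<le> x \<and> x < j \<and> odd (lam x)}" by simp
  have "{x. 1 \<le> x \<and> x < Suc j \<and> odd (lam x)} =
        {x. 1 \<le> x \<and> x < j \<and> odd (lam x)} \<union> (if 1 \<le> j \<and> odd (lam j) then {j} else {})"
    using less_Suc_eq by auto
  then show ?thesis unfolding odd_rank_def using fin by auto
qed

lemma lam_diff:
  assumes "dominant n lam"
  shows "lam1 n lam j - lam2 n lam j = chi n {x \<in> {1..Suc n}. even (odd_rank lam x)} j"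
proof (cases "j \<in> {1..n}")
  case False
  then show ?thesis using assms by (auto simp: lam2_def lam1_def chi_def dominant_def is_weight_def)
next
  case True
  have r: "odd_rank lam (Suc j) = odd_rank lam j + (if odd (lam j) then 1 else 0)"
    using odd_rank_Suc[of lam j] True by simp
  show ?thesis
  proof (cases "odd (lam j)")
    case False
    then have "2 * (lam j div 2) = lam j" by simp
    then show ?thesis using True False r by (simp add: lam2_def lam1_def chi_def)
  next
    case o: True
    show ?thesis
    proof (cases "even (odd_rank lam j)")
      case True
      have "even (lam j + 1)" using o by simp
      then have "2 * ((lam j + 1) div 2) = lam j + 1" by (rule even_two_times_div_two)
      then show ?thesis using \<open>j \<in> {1..n}\<close> o True r by (simp add: lam2_def lam1_def chi_def)
    next
      case False
      have "even (lam j - 1)" using o by simp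
      then have "2 * ((lam j - 1) div 2) = lam j - 1" by (rule even_two_times_div_two)
      then show ?thesis using \<open>j \<in> {1..n}\<close> o False r by (simp add: lam2_def lam1_def chi_def)
    qed
  qed
qed

lemma chi_sum:
  assumes "1 \<le> i" "i \<le> j" "j \<le> n"
  shows "(\<Sum>k = i..j. chi n S k) = (if i \<in> S then 1 else 0) - (if Suc j \<in> S then 1 else 0)"
proof -
  define f where "f x = (if x \<in> S then 1 else (0::int))" for x
  have "(\<Sum>k = i..j. chi n S k) = (\<Sum>k = i..j. - (f (Suc k) - f k))"
    using assms by (intro sum.cong) (auto simp: chi_def f_def)
  also have "\<dots> = - (\<Sum>k = i..j. f (Suc k) - f k)" by (rule sum_negf)
  also have "\<dots> = - (f (Suc j) - f i)" using assms by (simp add: sum_Suc_diff)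
  finally show ?thesis by (simp add: f_def)
qed

lemma odd_pm_nonneg:
  fixes x :: int
  assumes "odd x" "0 \<le> x"
  shows "0 \<le> x + (-1) ^ r"
proof -
  have "x \<noteq> 0" using assms by auto
  then have "1 \<le> x" using assms by simp
  moreover have "(-1::int) ^ r = 1 \<or> (-1::int) ^ r = -1" by (simp add: minus_one_power_iff)
  ultimately show ?thesis by auto
qed

lemma odd_pm_le:
  fixes x :: int
  assumes "odd x" "0 \<le> x"
  shows "(x + (-1) ^ r) div 2 \<le> x"
proof -
  have "x \<noteq> 0" using assms by auto
  then have "1 \<le> x" using assms by simp
  moreover have "(-1::int) ^ r = 1 \<or> (-1::int) ^ r = -1" by (simp add: minus_one_power_iff)
  ultimately show ?thesis by auto
qed

lemma min_arith:
  fixes a b c d :: int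
  assumes "a + b = c + d" "a - b \<le> 1" "b - a \<le> 1"
  shows "min c d \<le> min a b"
  using assms by (simp add: min_def)

theorem proposition5p3:
  fixes n :: nat and lam :: weight
  assumes "1 \<le> n" and "dominant n lam"
  shows "(lam1 n lam = lam2 n lam \<or>
          (\<exists>w\<in>weyl n. \<exists>i\<in>{1..n}. lam2 n lam = lam1 n lam - inv w (omega i)))
       \<and> (lam1 n lam, lam2 n lam) \<in> P2 n lam
       \<and> (\<forall>mu\<in>P2 n lam. preceq n mu (lam1 n lam, lam2 n lam))"
proof (intro conjI)
  define SS where "SS = {x \<in> {1..Suc n}. even (odd_rank lam x)}"
  have D: "lam1 n lam j - lam2 n lam j = chi n SS j" for j
    using lam_diff[OF assms(2)] SS_def by simp
  show "lam1 n lam = lam2 n lam \<or>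
          (\<exists>w\<in>weyl n. \<exists>i\<in>{1..n}. lam2 n lam = lam1 n lam - inv w (omega i))"
  proof (cases "lam1 n lam = lam2 n lam")
    case True then show ?thesis by simp
  next
    case False
    have sub: "SS \<subseteq> {1..Suc n}" using SS_def by auto
    have e: "{j. 1 \<le> j \<and> j < (1::nat) \<and> odd (lam j)} = {}" by auto
    have "odd_rank lam 1 = 0" unfolding odd_rank_def e by simp
    then have "1 \<in> SS" using SS_def by simp
    then have c1: "1 \<le> card SS" using sub
      by (metis One_nat_def Suc_leI card_gt_0_iff empty_iff finite_atLeastAtMost finite_subset)
    have "SS \<noteq> {1..Suc n}"
    proof
      assume e: "SS = {1..Suc n}"
      have "lam1 n lam = lam2 n lam"
      proof
        fix j
        have "chi n SS j = 0" using e by (simp add: chi_def)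
        then show "lam1 n lam j = lam2 n lam j" using D[of j] by simp
      qed
      then show False using False by simp
    qed
    then have "SS \<subset> {1..Suc n}" using sub by blast
    then have "card SS < card {1..Suc n}" by (meson finite_atLeastAtMost psubset_card_mono)
    then have c2: "card SS \<le> n" by simp
    obtain w where w: "w \<in> weyl n" "w (chi n SS) = omega (card SS)"
      using orbit[OF sub refl c1 c2] by blast
    have "inv w (omega (card SS)) = chi n SS"
      using w weyl_inj[OF w(1)] by (metis inv_f_f)
    moreover have "lam2 n lam = lam1 n lam - chi n SS"
      using D by (intro ext) (simp add: algebra_simps)
    ultimately show ?thesis using w c1 c2 by force
  qed
  show "(lam1 n lam, lam2 n lam) \<in> P2 n lam"
  proof -
    have d1: "dominant n (lam1 n lam)"
      using assms(2) by (auto simp: dominant_def is_weight_def lam1_def pos_imp_zdiv_nonneg_iff odd_pm_nonneg)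
    have d2: "dominant n (lam2 n lam)"
      using assms(2) by (auto simp: dominant_def is_weight_def lam1_def lam2_def odd_pm_le)
    show ?thesis using d1 d2 by (simp add: P2_def lam2_def)
  qed
  show "\<forall>mu\<in>P2 n lam. preceq n mu (lam1 n lam, lam2 n lam)"
  proof (intro ballI)
    fix mu assume mu: "mu \<in> P2 n lam"
    show "preceq n mu (lam1 n lam, lam2 n lam)"
      unfolding preceq_def
    proof (intro ballI)
      fix a assume a: "a \<in> pos_roots n"
      obtain i j where ij: "a = (i, j)" "1 \<le> i" "i \<le> j" "j \<le> n"
        using a by (auto simp: pos_roots_def)
      have s: "eval_coroot f a + eval_coroot g a = eval_coroot (f + g) a" for f g
        by (simp add: eval_coroot_def sum.distrib)
      have e1: "eval_coroot (fst mu) a + eval_coroot (snd mu) a = eval_coroot lam a"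
        using mu s by (auto simp: P2_def)
      have e2: "eval_coroot (lam1 n lam) a + eval_coroot (lam2 n lam) a = eval_coroot lam a"
        using s by (simp add: lam2_def)
      have e3: "eval_coroot (lam1 n lam) a - eval_coroot (lam2 n lam) a = (\<Sum>k = i..j. chi n SS k)"
        using ij D by (simp add: eval_coroot_def sum_subtractf[symmetric])
      show "min (eval_coroot (fst mu) a) (eval_coroot (snd mu) a)
         \<le> min (eval_coroot (fst (lam1 n lam, lam2 n lam)) a) (eval_coroot (snd (lam1 n lam, lam2 n lam)) a)"
        using min_arith[of "eval_coroot (lam1 n lam) a" "eval_coroot (lam2 n lam) a"] e1 e2 e3
          chi_sum[OF ij(2-4), where S=SS] by (simp split: if_splits)
    qed
  qed
qed

end
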